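(* Let $G=(V,E)$ be a simple, undirected, unweighted, connected, locally finite graph. If there is $k>0$ such that $\mathrm{Ric}(i,j)\ge k$ for every edge $i\sim j$, then there exists a polynomial $P$ such that $|B_r(v)|\le P(r)$ for all $v\in V$ and all $r\ge0$.
   Context: $B_r(v)=\{u\in V: d_G(u,v)\le r\}$. For an edge $i\sim j$ with degrees $d_i,d_j$ and neighbour sets $S_1(\cdot)$: $\sharp_\Delta=S_1(i)\cap S_1(j)$; $\sharp_\square^i=\{k\in S_1(i)\setminus (S_1(j)\cup\{j\}) : \exists\, w\in (S_1(k)\cap S_1(j))\setminus (S_1(i)\cup\{i\})\}$, $\sharp_\square^j$ symmetric; $\gamma_{\max}=\max\big\{\max_{k\in\sharp_\square^i}|(S_1(k)\cap S_1(j))\setminus(S_1(i)\cup\{i\})|,\ \max_{w\in\sharp_\square^j}|(S_1(w)\cap S_1(i))\setminus(S_1(j)\cup\{j\})|\big\}$. Balanced Forman curvature: $\mathrm{Ric}(i,j)=0$ if $\min\{d_i,d_j\}=1$, otherwise $\mathrm{Ric}(i,j)=\frac{2}{d_i}+\frac{2}{d_j}-2+\frac{2|\sharp_\Delta|}{\max\{d_i,d_j\}}+\frac{|\sharp_\Delta|}{\min\{d_i,d_j\}}+\frac{\gamma_{\max}^{-1}}{\max\{d_i,d_j\}}(|\sharp_\square^i|+|\sharp_\square^j|)$, the last term being $0$ when $\sharp_\square^i=\emptyset$. *)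

theory Defs
  imports Complex_Main "HOL-Computational_Algebra.Polynomial"
begin

text \<open>A graph is given by a vertex set V and an edge relation E (only edges between
vertices of V are taken into account).\<close>

definition simple_graph :: "'a set \<Rightarrow> ('a \<Rightarrow> 'a \<Rightarrow> bool) \<Rightarrow> bool" where
  "simple_graph V E \<longleftrightarrow> (\<forall>x y. E x y \<longrightarrow> E y x) \<and> (\<forall>x. \<not> E x x)"

definition nbhd :: "'a set \<Rightarrow> ('a \<Rightarrow> 'a \<Rightarrow> bool) \<Rightarrow> 'a \<Rightarrow> 'a set" where
  "nbhd V E v = {u \<in> V. E v u}"

definition deg :: "'a set \<Rightarrow> ('a \<Rightarrow> 'a \<Rightarrow> bool) \<Rightarrow> 'a \<Rightarrow> nat" where
  "deg V E v = card (nbhd V E v)"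

definition locally_finite :: "'a set \<Rightarrow> ('a \<Rightarrow> 'a \<Rightarrow> bool) \<Rightarrow> bool" where
  "locally_finite V E \<longleftrightarrow> (\<forall>v\<in>V. finite (nbhd V E v))"

definition walk_rel :: "'a set \<Rightarrow> ('a \<Rightarrow> 'a \<Rightarrow> bool) \<Rightarrow> 'a \<Rightarrow> 'a \<Rightarrow> bool" where
  "walk_rel V E x y \<longleftrightarrow> x \<in> V \<and> y \<in> V \<and> E x y"

definition connected_graph :: "'a set \<Rightarrow> ('a \<Rightarrow> 'a \<Rightarrow> bool) \<Rightarrow> bool" where
  "connected_graph V E \<longleftrightarrow> (\<forall>u\<in>V. \<forall>v\<in>V. \<exists>n. (walk_rel V E ^^ n) u v)"

definition gdist :: "'a set \<Rightarrow> ('a \<Rightarrow> 'a \<Rightarrow> bool) \<Rightarrow> 'a \<Rightarrow> 'a \<Rightarrow> nat" where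
  "gdist V E u v = (LEAST n. (walk_rel V E ^^ n) u v)"

definition gball :: "'a set \<Rightarrow> ('a \<Rightarrow> 'a \<Rightarrow> bool) \<Rightarrow> real \<Rightarrow> 'a \<Rightarrow> 'a set" where
  "gball V E r v = {u \<in> V. real (gdist V E u v) \<le> r}"

definition tri :: "'a set \<Rightarrow> ('a \<Rightarrow> 'a \<Rightarrow> bool) \<Rightarrow> 'a \<Rightarrow> 'a \<Rightarrow> 'a set" where
  "tri V E i j = nbhd V E i \<inter> nbhd V E j"

definition sq :: "'a set \<Rightarrow> ('a \<Rightarrow> 'a \<Rightarrow> bool) \<Rightarrow> 'a \<Rightarrow> 'a \<Rightarrow> 'a set" where
  "sq V E i j = {k \<in> nbhd V E i - (nbhd V E j \<union> {j}).
      \<exists>w. w \<in> (nbhd V E k \<inter> nbhd V E j) - (nbhd V E i \<union> {i})}"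

definition gamma_max :: "'a set \<Rightarrow> ('a \<Rightarrow> 'a \<Rightarrow> bool) \<Rightarrow> 'a \<Rightarrow> 'a \<Rightarrow> nat" where
  "gamma_max V E i j = max
     (Max ((\<lambda>k. card ((nbhd V E k \<inter> nbhd V E j) - (nbhd V E i \<union> {i}))) ` sq V E i j))
     (Max ((\<lambda>w. card ((nbhd V E w \<inter> nbhd V E i) - (nbhd V E j \<union> {j}))) ` sq V E j i))"

definition bf_ric :: "'a set \<Rightarrow> ('a \<Rightarrow> 'a \<Rightarrow> bool) \<Rightarrow> 'a \<Rightarrow> 'a \<Rightarrow> real" where
  "bf_ric V E i j =
    (let di = real (deg V E i); dj = real (deg V E j); t = real (card (tri V E i j)) in
     if min di dj = 1 then 0 else
       2 / di + 2 / dj - 2 + 2 * t / max di dj + t / min di dj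
       + (if sq V E i j = {} then 0 else
           (inverse (real (gamma_max V E i j)) / max di dj)
             * (real (card (sq V E i j)) + real (card (sq V E j i)))))"

end

theory Submission imports Defs begin

context
  fixes V :: "'a set" and E :: "'a \<Rightarrow> 'a \<Rightarrow> bool"
  assumes sg: "simple_graph V E" and lf: "locally_finite V E"
begin

lemma Esym: "E x y \<Longrightarrow> E y x" using sg unfolding simple_graph_def by blast
lemma Eirr: "\<not> E x x" using sg unfolding simple_graph_def by blast
lemma nb_fin: "v \<in> V \<Longrightarrow> finite (nbhd V E v)" using lf unfolding locally_finite_def by blast

lemma sq_bound:
  fixes f :: "'a \<Rightarrow> real"
  assumes aV: "a \<in> V" and bV: "b \<in> V" and ab: "E a b"
    and lip: "\<And>u w. u \<in> V \<Longrightarrow> w \<in> V \<Longrightarrow> E u w \<Longrightarrow> f w \<le> f u + 1"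
    and fa: "f a = 0" and fb: "f b = 1"
    and ne: "sq V E a b \<noteq> {}"
  shows "sum f (sq V E b a) / real (deg V E b) - sum f (sq V E a b) / real (deg V E a)
     \<le> 2 * real (card (sq V E b a)) / real (deg V E b) + real (card (sq V E a b)) / real (deg V E a)
        - inverse (real (gamma_max V E a b)) / max (real (deg V E a)) (real (deg V E b))
          * (real (card (sq V E a b)) + real (card (sq V E b a)))"
proof -
  define A where "A = nbhd V E a"
  define B where "B = nbhd V E b"
  define Sa where "Sa = sq V E a b"
  define Sb where "Sb = sq V E b a"
  define da where "da = real (deg V E a)"
  define db where "db = real (deg V E b)"
  define \<gamma> where "\<gamma> = real (gamma_max V E a b)"
  define d where "d = max da db"
  have finA: "finite A" using nb_fin aV A_def by simp
  have finB: "finite B" using nb_fin bV B_def by simp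
  have SaA: "Sa \<subseteq> A - (B \<union> {b})" unfolding Sa_def sq_def A_def B_def by blast
  have SbB: "Sb \<subseteq> B - (A \<union> {a})" unfolding Sb_def sq_def A_def B_def by blast
  have finSa: "finite Sa" using SaA finA finite_subset by blast
  have finSb: "finite Sb" using SbB finB finite_subset by blast
  have bA: "b \<in> A" using ab bV unfolding A_def nbhd_def by auto
  have aB: "a \<in> B" using ab aV Esym unfolding B_def nbhd_def by auto
  have "0 < card A" using finA bA by (auto simp: card_gt_0_iff)
  then have da_pos: "da \<ge> 1" unfolding da_def deg_def A_def by linarith
  have "0 < card B" using finB aB by (auto simp: card_gt_0_iff)
  then have db_pos: "db \<ge> 1" unfolding db_def deg_def B_def by linarith
  define hw where "hw w = card {k\<in>Sa. E k w}" for w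
  define hk where "hk k = card {w\<in>Sb. E k w}" for k
  have hw_ge: "hw w \<ge> 1" if "w \<in> Sb" for w
  proof -
    from that obtain k where k: "k \<in> (nbhd V E w \<inter> nbhd V E a) - (nbhd V E b \<union> {b})"
      unfolding Sb_def sq_def by blast
    have wV: "w \<in> V" using that SbB unfolding B_def nbhd_def by auto
    have "k \<in> Sa" unfolding Sa_def sq_def
      using k that SbB wV unfolding A_def B_def nbhd_def by (auto intro: Esym)
    moreover have "E k w" using k Esym unfolding nbhd_def by auto
    ultimately have "{k\<in>Sa. E k w} \<noteq> {}" by blast
    then show ?thesis unfolding hw_def using finSa
      by (metis (no_types, lifting) One_nat_def Suc_leI card_gt_0_iff finite_subset mem_Collect_eq subsetI)
  qed
  have hk_ge: "hk k \<ge> 1" if "k \<in> Sa" for k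
  proof -
    from that obtain w where w: "w \<in> (nbhd V E k \<inter> nbhd V E b) - (nbhd V E a \<union> {a})"
      unfolding Sa_def sq_def by blast
    have kV: "k \<in> V" using that SaA unfolding A_def nbhd_def by auto
    have "w \<in> Sb" unfolding Sb_def sq_def
      using w that SaA kV unfolding A_def B_def nbhd_def by (auto intro: Esym)
    moreover have "E k w" using w unfolding nbhd_def by auto
    ultimately have "{w\<in>Sb. E k w} \<noteq> {}" by blast
    then show ?thesis unfolding hk_def using finSb
      by (metis (no_types, lifting) One_nat_def Suc_leI card_gt_0_iff finite_subset mem_Collect_eq subsetI)
  qed
  have hk_le: "real (hk k) \<le> \<gamma>" if "k \<in> Sa" for k
  proof -
    have kV: "k \<in> V" using that SaA unfolding A_def nbhd_def by auto
    have "{w\<in>Sb. E k w} \<subseteq> (nbhd V E k \<inter> nbhd V E b) - (nbhd V E a \<union> {a})"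
      using SbB unfolding A_def B_def nbhd_def by auto
    then have "hk k \<le> card ((nbhd V E k \<inter> nbhd V E b) - (nbhd V E a \<union> {a}))"
      unfolding hk_def using nb_fin[OF kV] by (intro card_mono) auto
    also have "\<dots> \<le> Max ((\<lambda>k. card ((nbhd V E k \<inter> nbhd V E b) - (nbhd V E a \<union> {a}))) ` sq V E a b)"
      using that finSa Sa_def by (intro Max_ge) auto
    also have "\<dots> \<le> gamma_max V E a b" unfolding gamma_max_def by simp
    finally show ?thesis unfolding \<gamma>_def by simp
  qed
  have hw_le: "real (hw w) \<le> \<gamma>" if "w \<in> Sb" for w
  proof -
    have wV: "w \<in> V" using that SbB unfolding B_def nbhd_def by auto
    have "{k\<in>Sa. E k w} \<subseteq> (nbhd V E w \<inter> nbhd V E a) - (nbhd V E b \<union> {b})"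
      using SaA unfolding A_def B_def nbhd_def by (auto intro: Esym)
    then have "hw w \<le> card ((nbhd V E w \<inter> nbhd V E a) - (nbhd V E b \<union> {b}))"
      unfolding hw_def using nb_fin[OF wV] by (intro card_mono) auto
    also have "\<dots> \<le> Max ((\<lambda>w. card ((nbhd V E w \<inter> nbhd V E a) - (nbhd V E b \<union> {b}))) ` sq V E b a)"
      using that finSb Sb_def by (intro Max_ge) auto
    also have "\<dots> \<le> gamma_max V E a b" unfolding gamma_max_def by simp
    finally show ?thesis unfolding \<gamma>_def by simp
  qed
  obtain k0 where k0: "k0 \<in> Sa" using ne Sa_def by blast
  have g1: "\<gamma> \<ge> 1" using hk_le[OF k0] hk_ge[OF k0] by linarith
  define q where "q = inverse \<gamma> / d"
  have d_ge: "d \<ge> da" "d \<ge> db" unfolding d_def by auto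
  have qpos: "q > 0" using g1 d_ge da_pos unfolding q_def by auto
  have qh: "q * x \<le> 1 / d" if "x \<le> \<gamma>" "0 \<le> x" for x
  proof -
    have "q * x = (x / \<gamma>) / d" unfolding q_def by (simp add: divide_inverse mult.commute)
    also have "\<dots> \<le> 1 / d" using that g1 d_ge da_pos
      by (intro divide_right_mono) auto
    finally show ?thesis .
  qed
  have inv_da: "1 / d \<le> 1 / da" "1 / d \<le> 1 / db" using d_ge da_pos db_pos
    by (auto intro: divide_left_mono)
  define I where "I k w = (if E k w then (1::real) else 0)" for k w
  have hw_sum: "real (hw w) = (\<Sum>k\<in>Sa. I k w)" for w
    unfolding hw_def I_def using finSa by (simp add: sum.inter_filter[symmetric])
  have hk_sum: "real (hk k) = (\<Sum>w\<in>Sb. I k w)" for k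
    unfolding hk_def I_def using finSb by (simp add: sum.inter_filter[symmetric])
  define N where "N = (\<Sum>k\<in>Sa. \<Sum>w\<in>Sb. I k w)"
  have N_w: "N = (\<Sum>w\<in>Sb. real (hw w))" unfolding N_def hw_sum by (rule sum.swap)
  have N_k: "N = (\<Sum>k\<in>Sa. real (hk k))" unfolding N_def hk_sum ..
  have N_sa: "N \<ge> real (card Sa)"
  proof -
    have "(\<Sum>k\<in>Sa. 1::real) \<le> (\<Sum>k\<in>Sa. real (hk k))" by (rule sum_mono) (use hk_ge in force)
    then show ?thesis unfolding N_k by simp
  qed
  have N_sb: "N \<ge> real (card Sb)"
  proof -
    have "(\<Sum>k\<in>Sb. 1::real) \<le> (\<Sum>k\<in>Sb. real (hw k))" by (rule sum_mono) (use hw_ge in force)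
    then show ?thesis unfolding N_w by simp
  qed
  have fB: "f w \<le> 2" if "w \<in> B" for w
  proof -
    have "w \<in> V" "E b w" using that unfolding B_def nbhd_def by auto
    then show ?thesis using lip[of b w] bV fb by simp
  qed
  have fA: "f k \<ge> -1" if "k \<in> A" for k
  proof -
    have "k \<in> V" "E k a" using that Esym unfolding A_def nbhd_def by auto
    then show ?thesis using lip[of k a] aV fa by simp
  qed
  have pw: "f w / db \<le> 2 * (1/db - q * hw w) + q * (\<Sum>k\<in>Sa. I k w * f w)" if "w \<in> Sb" for w
  proof -
    have c: "1/db - q * hw w \<ge> 0" using qh[of "hw w"] hw_le[OF that] inv_da by auto
    have fw: "f w \<le> 2" using fB that SbB by auto
    have "f w / db = (1/db - q * hw w) * f w + q * (hw w * f w)" by (simp add: algebra_simps)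
    also have "\<dots> \<le> (1/db - q * hw w) * 2 + q * (hw w * f w)"
      using c fw by (intro add_right_mono mult_left_mono) auto
    also have "hw w * f w = (\<Sum>k\<in>Sa. I k w * f w)" unfolding hw_sum by (simp add: sum_distrib_right)
    finally show ?thesis by simp
  qed
  have pk: "f k / da \<ge> - (1/da - q * hk k) + q * (\<Sum>w\<in>Sb. I k w * f k)" if "k \<in> Sa" for k
  proof -
    have c: "1/da - q * hk k \<ge> 0" using qh[of "hk k"] hk_le[OF that] inv_da by auto
    have fk: "f k \<ge> -1" using fA that SaA by auto
    have "(1/da - q * hk k) * (-1) + q * (hk k * f k) \<le> (1/da - q * hk k) * f k + q * (hk k * f k)"
      using c fk by (intro add_right_mono mult_left_mono) auto
    also have "\<dots> = f k / da" by (simp add: algebra_simps)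
    also have "hk k * f k = (\<Sum>w\<in>Sb. I k w * f k)" unfolding hk_sum by (simp add: sum_distrib_right)
    finally show ?thesis by simp
  qed
  have S1: "sum f Sb / db \<le> 2 * card Sb / db - 2 * q * N + q * (\<Sum>w\<in>Sb. \<Sum>k\<in>Sa. I k w * f w)"
  proof -
    have "sum f Sb / db = (\<Sum>w\<in>Sb. f w / db)" by (simp add: sum_divide_distrib)
    also have "\<dots> \<le> (\<Sum>w\<in>Sb. 2 * (1/db - q * hw w) + q * (\<Sum>k\<in>Sa. I k w * f w))"
      by (rule sum_mono) (rule pw)
    also have "\<dots> = 2 * card Sb / db - 2 * q * N + q * (\<Sum>w\<in>Sb. \<Sum>k\<in>Sa. I k w * f w)"
      unfolding N_w sum.distrib sum_subtractf sum_distrib_left[symmetric] by (simp add: right_diff_distrib)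
    finally show ?thesis .
  qed
  have S2: "sum f Sa / da \<ge> - card Sa / da + q * N + q * (\<Sum>k\<in>Sa. \<Sum>w\<in>Sb. I k w * f k)"
  proof -
    have "- card Sa / da + q * N + q * (\<Sum>k\<in>Sa. \<Sum>w\<in>Sb. I k w * f k)
        = (\<Sum>k\<in>Sa. - (1/da - q * hk k) + q * (\<Sum>w\<in>Sb. I k w * f k))"
      unfolding N_k sum.distrib sum_subtractf sum_distrib_left[symmetric] by (simp add: right_diff_distrib sum_subtractf sum_distrib_left)
    also have "\<dots> \<le> (\<Sum>k\<in>Sa. f k / da)" by (rule sum_mono) (rule pk)
    also have "\<dots> = sum f Sa / da" by (simp add: sum_divide_distrib)
    finally show ?thesis .
  qed
  have S3: "(\<Sum>w\<in>Sb. \<Sum>k\<in>Sa. I k w * f w) - (\<Sum>k\<in>Sa. \<Sum>w\<in>Sb. I k w * f k) \<le> N"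
  proof -
    have "(\<Sum>w\<in>Sb. \<Sum>k\<in>Sa. I k w * f w) = (\<Sum>k\<in>Sa. \<Sum>w\<in>Sb. I k w * f w)" by (rule sum.swap)
    then have "(\<Sum>w\<in>Sb. \<Sum>k\<in>Sa. I k w * f w) - (\<Sum>k\<in>Sa. \<Sum>w\<in>Sb. I k w * f k)
         = (\<Sum>k\<in>Sa. \<Sum>w\<in>Sb. I k w * (f w - f k))"
      by (simp add: sum_subtractf algebra_simps)
    also have "\<dots> \<le> (\<Sum>k\<in>Sa. \<Sum>w\<in>Sb. I k w)"
    proof (intro sum_mono)
      fix k w assume k: "k \<in> Sa" and w: "w \<in> Sb"
      have "E k w \<Longrightarrow> f w \<le> f k + 1" using lip k w SaA SbB unfolding A_def B_def nbhd_def by auto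
      then show "I k w * (f w - f k) \<le> I k w" unfolding I_def by auto
    qed
    finally show ?thesis unfolding N_def .
  qed
  have "sum f Sb / db - sum f Sa / da \<le> 2 * card Sb / db + card Sa / da - 2 * q * N"
  proof -
    have "q * ((\<Sum>w\<in>Sb. \<Sum>k\<in>Sa. I k w * f w) - (\<Sum>k\<in>Sa. \<Sum>w\<in>Sb. I k w * f k)) \<le> q * N"
      using S3 qpos by (intro mult_left_mono) auto
    then show ?thesis using S1 S2 unfolding right_diff_distrib by linarith
  qed
  also have "\<dots> \<le> 2 * card Sb / db + card Sa / da - q * (card Sa + card Sb)"
  proof -
    have "q * card Sa \<le> q * N" "q * card Sb \<le> q * N" using N_sa N_sb qpos by auto
    then show ?thesis by (simp add: distrib_left)
  qed
  finally show ?thesis unfolding q_def d_def Sa_def Sb_def da_def db_def \<gamma>_def by simp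
qed

lemma arith1:
  fixes da db t :: real assumes "da > 0" "db > 0" "t \<ge> 0"
  shows "t * max 0 (1/db - 1/da) - 2*t/db - t/da \<le> - (2*t/max da db) - t/min da db"
proof (cases "da \<le> db")
  case True
  then have "1/db \<le> 1/da" using assms by (intro divide_left_mono) auto
  then have "max 0 (1/db - 1/da) = 0" by simp
  then show ?thesis using True by simp
next
  case False
  then have "1/db \<ge> 1/da" using assms by (intro divide_left_mono) auto
  then have "max 0 (1/db - 1/da) = 1/db - 1/da" by simp
  then show ?thesis using False by (simp add: right_diff_distrib)
qed

lemma local_ineq:
  fixes f :: "'a \<Rightarrow> real"
  assumes aV: "a \<in> V" and bV: "b \<in> V" and ab: "E a b"
    and ric: "bf_ric V E a b > 0"
    and lip: "\<And>u w. u \<in> V \<Longrightarrow> w \<in> V \<Longrightarrow> E u w \<Longrightarrow> f w \<le> f u + 1"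
    and fa: "f a = 0" and fb: "f b = 1"
  shows "sum f (nbhd V E b) / real (deg V E b) - sum f (nbhd V E a) / real (deg V E a)
     \<le> 1 - bf_ric V E a b"
proof -
  define A where "A = nbhd V E a"
  define B where "B = nbhd V E b"
  define T where "T = tri V E a b"
  define Sa where "Sa = sq V E a b"
  define Sb where "Sb = sq V E b a"
  define Ra where "Ra = A - (B \<union> {b}) - Sa"
  define Rb where "Rb = B - (A \<union> {a}) - Sb"
  define da where "da = real (deg V E a)"
  define db where "db = real (deg V E b)"
  define sqt where "sqt = (if Sa = {} then 0 else
           (inverse (real (gamma_max V E a b)) / max da db)
             * (real (card Sa) + real (card Sb)))"
  have finA: "finite A" using nb_fin aV A_def by simp
  have finB: "finite B" using nb_fin bV B_def by simp
  have TAB: "T = A \<inter> B" unfolding T_def tri_def A_def B_def ..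
  have SaA: "Sa \<subseteq> A - (B \<union> {b})" unfolding Sa_def sq_def A_def B_def by blast
  have SbB: "Sb \<subseteq> B - (A \<union> {a})" unfolding Sb_def sq_def A_def B_def by blast
  have bA: "b \<in> A" using ab bV unfolding A_def nbhd_def by auto
  have aB: "a \<in> B" using ab aV Esym unfolding B_def nbhd_def by auto
  have aA: "a \<notin> A" using Eirr unfolding A_def nbhd_def by auto
  have bB: "b \<notin> B" using Eirr unfolding B_def nbhd_def by auto
  have Adec: "A = insert b (T \<union> Sa \<union> Ra)" using SaA bA unfolding TAB Ra_def by auto
  have Bdec: "B = insert a (T \<union> Sb \<union> Rb)" using SbB aB unfolding TAB Rb_def by auto
  have finT: "finite T" using TAB finA by simp
  have finSa: "finite Sa" using SaA finA finite_subset by blast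
  have finSb: "finite Sb" using SbB finB finite_subset by blast
  have finRa: "finite Ra" using finA Ra_def by simp
  have finRb: "finite Rb" using finB Rb_def by simp
  have dA1: "b \<notin> T \<union> Sa \<union> Ra" using bB SaA unfolding TAB Ra_def by auto
  have dA2: "T \<inter> Sa = {}" "(T \<union> Sa) \<inter> Ra = {}" using SaA unfolding TAB Ra_def by auto
  have dB1: "a \<notin> T \<union> Sb \<union> Rb" using aA SbB unfolding TAB Rb_def by auto
  have dB2: "T \<inter> Sb = {}" "(T \<union> Sb) \<inter> Rb = {}" using SbB unfolding TAB Rb_def by auto
  have sumA: "sum f A = f b + sum f T + sum f Sa + sum f Ra"
    unfolding Adec using dA1 dA2 finT finSa finRa
    by (simp add: sum.union_disjoint)
  have sumB: "sum f B = f a + sum f T + sum f Sb + sum f Rb"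
    unfolding Bdec using dB1 dB2 finT finSb finRb
    by (simp add: sum.union_disjoint)
  have cardA: "da = 1 + card T + card Sa + card Ra"
    unfolding da_def deg_def A_def[symmetric] Adec using dA1 dA2 finT finSa finRa
    by (simp add: card_Un_disjoint)
  have cardB: "db = 1 + card T + card Sb + card Rb"
    unfolding db_def deg_def B_def[symmetric] Bdec using dB1 dB2 finT finSb finRb
    by (simp add: card_Un_disjoint)
  have dapos: "da > 0" "db > 0" using cardA cardB by auto
  have fB: "0 \<le> f w \<and> f w \<le> 2" if "w \<in> B" for w
  proof -
    have "w \<in> V" "E b w" using that unfolding B_def nbhd_def by auto
    then show ?thesis using lip[of b w] lip[of w b] bV fb Esym by force
  qed
  have fA: "- 1 \<le> f k \<and> f k \<le> 1" if "k \<in> A" for k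
  proof -
    have "k \<in> V" "E a k" using that unfolding A_def nbhd_def by auto
    then show ?thesis using lip[of k a] lip[of a k] aV fa Esym by force
  qed
  have ST0: "0 \<le> sum f T" using fB TAB by (intro sum_nonneg) auto
  have ST1: "sum f T \<le> card T"
    using sum_bounded_above[of T f 1] fA TAB by auto
  have SRb: "sum f Rb \<le> 2 * card Rb"
    using sum_bounded_above[of Rb f 2] fB Rb_def by (auto simp: mult.commute)
  have SRa: "sum f Ra \<ge> - card Ra"
    using sum_bounded_below[of Ra "-1" f] fA Ra_def by auto
  have SQ: "sum f Sb / db - sum f Sa / da \<le> 2 * card Sb / db + card Sa / da - sqt"
  proof (cases "Sa = {}")
    case True
    have "sum f Sb \<le> 2 * card Sb"
      using sum_bounded_above[of Sb f 2] fB SbB by (auto simp: mult.commute)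
    then have "sum f Sb / db \<le> 2 * card Sb / db" using dapos by (intro divide_right_mono) auto
    then show ?thesis using True sqt_def by simp
  next
    case False
    then show ?thesis using sq_bound[OF aV bV ab lip fa fb] unfolding sqt_def Sa_def Sb_def da_def db_def
      by simp
  qed
  have ric_eq: "bf_ric V E a b = 2 / da + 2 / db - 2 + 2 * card T / max da db + card T / min da db + sqt"
  proof -
    have "min da db \<noteq> 1"
    proof
      assume "min da db = 1"
      then have "bf_ric V E a b = 0" unfolding bf_ric_def da_def db_def Let_def by simp
      then show False using ric by simp
    qed
    then show ?thesis unfolding bf_ric_def sqt_def da_def db_def Let_def T_def Sa_def Sb_def by simp
  qed
  have key: "sum f B / db - sum f A / da
      = sum f T * (1/db - 1/da) + (sum f Sb / db - sum f Sa / da) + sum f Rb / db - sum f Ra / da - 1 / da"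
    unfolding sumA sumB fa fb using dapos by (simp add: field_simps)
  have t1: "sum f T * (1/db - 1/da) \<le> card T * max 0 (1/db - 1/da)"
  proof -
    have "sum f T * (1/db - 1/da) \<le> sum f T * max 0 (1/db - 1/da)"
      using ST0 by (intro mult_left_mono) auto
    also have "\<dots> \<le> card T * max 0 (1/db - 1/da)" using ST1 by (intro mult_right_mono) auto
    finally show ?thesis .
  qed
  have t2: "sum f Rb / db \<le> 2 * card Rb / db" using SRb dapos by (intro divide_right_mono) auto
  have t3: "- sum f Ra / da \<le> card Ra / da"
  proof -
    have "- sum f Ra / da \<le> card Ra / da" using SRa dapos by (intro divide_right_mono) auto
    then show ?thesis by simp
  qed
  have e1: "2 * card Sb / db + 2 * card Rb / db = 2 - 2 / db - 2 * card T / db"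
    using cardB dapos by (simp add: field_simps)
  have e2: "card Sa / da + card Ra / da = 1 - 1 / da - card T / da"
    using cardA dapos by (simp add: field_simps)
  have ar: "card T * max 0 (1/db - 1/da) - 2 * card T / db - card T / da
      \<le> - (2 * card T / max da db) - card T / min da db"
    using arith1[OF dapos(1) dapos(2), of "card T"] by simp
  have "sum f B / db - sum f A / da \<le> 1 - bf_ric V E a b"
    unfolding key ric_eq using t1 t2 t3 e1 e2 ar SQ by linarith
  then show ?thesis unfolding A_def B_def da_def db_def .
qed

end

theorem corollary3:
  fixes V :: "'a set" and E :: "'a \<Rightarrow> 'a \<Rightarrow> bool"
  assumes "simple_graph V E"
    and "connected_graph V E"
    and "locally_finite V E"
    and "\<exists>k::real. k > 0 \<and> (\<forall>i\<in>V. \<forall>j\<in>V. E i j \<longrightarrow> bf_ric V E i j \<ge> k)"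
  shows "\<exists>P :: real poly. \<forall>v\<in>V. \<forall>r::real. r \<ge> 0 \<longrightarrow>
           real (card (gball V E r v)) \<le> poly P r"
proof -
  note sg = assms(1) and lf = assms(3)
  obtain k :: real where k0: "k > 0" and kric: "\<And>i j. i \<in> V \<Longrightarrow> j \<in> V \<Longrightarrow> E i j \<Longrightarrow> bf_ric V E i j \<ge> k"
    using assms(4) by blast
  have finV: "finite V"
  proof (cases "V = {}")
    case True then show ?thesis by simp
  next
    case False
    then obtain x0 where x0: "x0 \<in> V" by blast
    define g where "g u = gdist V E x0 u" for u
    define f where "f u = real (g u)" for u
    have F1: "(walk_rel V E ^^ g u) x0 u" if "u \<in> V" for u
    proof -
      have "\<exists>n. (walk_rel V E ^^ n) x0 u" using assms(2) x0 that unfolding connected_graph_def by blast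
      then show ?thesis unfolding g_def gdist_def by (rule LeastI_ex)
    qed
    have F3: "g w \<le> g u + 1" if "u \<in> V" "w \<in> V" "E u w" for u w
    proof -
      have "(walk_rel V E ^^ Suc (g u)) x0 w"
        using relpowp_Suc_I[OF F1[OF that(1)]] that unfolding walk_rel_def by blast
      then show ?thesis unfolding g_def gdist_def by (simp add: Least_le)
    qed
    have F4: "\<exists>z\<in>V. E z u \<and> g z = m" if "u \<in> V" "g u = Suc m" for u m
    proof -
      have "(walk_rel V E ^^ Suc m) x0 u" using F1[OF that(1)] that(2) by simp
      then obtain z where z1: "(walk_rel V E ^^ m) x0 z" and z2: "walk_rel V E z u"
        by (rule relpowp_Suc_E)
      have zV: "z \<in> V" and Ezu: "E z u" using z2 unfolding walk_rel_def by auto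
      have "g z \<le> m" using z1 unfolding g_def gdist_def by (simp add: Least_le)
      moreover have "g u \<le> g z + 1" using F3[OF zV that(1) Ezu] .
      ultimately show ?thesis using zV Ezu that(2) by auto
    qed
    have F0: "u = x0" if "u \<in> V" "g u = 0" for u
      using F1[OF that(1)] that(2) by (auto elim: relpowp_0_E)
    have lipf: "f w \<le> f u + 1" if "u \<in> V" "w \<in> V" "E u w" for u w
      using F3[OF that] unfolding f_def by simp
    define D where "D y = sum f (nbhd V E y) / real (deg V E y) - f y" for y
    have D1: "D y \<le> 1" if "y \<in> V" for y
    proof (cases "deg V E y = 0")
      case True then show ?thesis unfolding D_def f_def by simp
    next
      case False
      have "sum f (nbhd V E y) \<le> real (card (nbhd V E y)) * (f y + 1)"
        using sum_bounded_above[of "nbhd V E y" f "f y + 1"] lipf[of y] that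
        unfolding nbhd_def by auto
      then have "sum f (nbhd V E y) / real (deg V E y) \<le> f y + 1"
        using False unfolding deg_def by (simp add: pos_divide_le_eq mult.commute)
      then show ?thesis unfolding D_def by simp
    qed
    have sumshift: "sum (\<lambda>u. f u - c) N / real (card N) = sum f N / real (card N) - c"
      if "card N > 0" for N c
      using that by (simp add: sum_subtractf field_simps)
    have Dind: "\<forall>y\<in>V. g y = n \<longrightarrow> D y \<le> 1 - real n * k" for n
    proof (induction n)
      case 0 then show ?case using D1 by simp
    next
      case (Suc n)
      show ?case
      proof (intro ballI impI)
        fix y assume yV: "y \<in> V" and gy: "g y = Suc n"
        obtain z where zV: "z \<in> V" and Ezy: "E z y" and gz: "g z = n" using F4[OF yV gy] by blast
        have IH: "D z \<le> 1 - real n * k" using Suc.IH zV gz by blast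
        define f' where "f' u = f u - f z" for u
        have fy: "f y = f z + 1" unfolding f_def using gy gz by simp
        have ric: "bf_ric V E z y > 0" using kric[OF zV yV Ezy] k0 by linarith
        have loc: "sum f' (nbhd V E y) / real (deg V E y) - sum f' (nbhd V E z) / real (deg V E z)
            \<le> 1 - bf_ric V E z y"
          by (rule local_ineq[OF sg lf zV yV Ezy ric]) (auto simp: f'_def fy lipf)
        have cy: "card (nbhd V E y) > 0"
          using nb_fin[OF sg lf yV] zV Ezy Esym[OF sg lf] by (auto simp: card_gt_0_iff nbhd_def)
        have cz: "card (nbhd V E z) > 0"
          using nb_fin[OF sg lf zV] yV Ezy by (auto simp: card_gt_0_iff nbhd_def)
        have "sum f (nbhd V E y) / real (deg V E y) - sum f (nbhd V E z) / real (deg V E z) \<le> 1 - k"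
          using loc sumshift[OF cy, of "f z"] sumshift[OF cz, of "f z"] kric[OF zV yV Ezy]
          unfolding f'_def deg_def by simp
        then show "D y \<le> 1 - real (Suc n) * k" using IH fy unfolding D_def by (simp add: algebra_simps)
      qed
    qed
    have Dlow: "D y \<ge> -1" if yV: "y \<in> V" and gy: "g y = Suc m" for y m
    proof -
      obtain z where zV: "z \<in> V" and Ezy: "E z y" using F4[OF yV gy] by blast
      have cy: "card (nbhd V E y) > 0"
        using nb_fin[OF sg lf yV] zV Ezy Esym[OF sg lf] by (auto simp: card_gt_0_iff nbhd_def)
      have "sum f (nbhd V E y) \<ge> real (card (nbhd V E y)) * (f y - 1)"
        using sum_bounded_below[of "nbhd V E y" "f y - 1" f] lipf[of _ y] yV Esym[OF sg lf]
        unfolding nbhd_def by force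
      then have "sum f (nbhd V E y) / real (deg V E y) \<ge> f y - 1"
        using cy unfolding deg_def by (simp add: pos_le_divide_eq mult.commute)
      then show ?thesis unfolding D_def by simp
    qed
    have gbound: "real (g y) \<le> 2 / k" if "y \<in> V" for y
    proof (cases "g y")
      case 0 then show ?thesis using k0 by simp
    next
      case (Suc m)
      have "-1 \<le> 1 - real (g y) * k" using Dlow[OF that Suc] Dind[of "g y"] that by fastforce
      then have "real (g y) * k \<le> 2" by simp
      then show ?thesis using k0 by (simp add: pos_le_divide_eq)
    qed
    define M where "M = nat \<lceil>2 / k\<rceil>"
    have gM: "g y \<le> M" if "y \<in> V" for y
    proof -
      have "real (g y) \<le> real_of_int \<lceil>2 / k\<rceil>" using gbound[OF that] by linarith
      then show ?thesis unfolding M_def by linarith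
    qed
    have finB: "finite {u\<in>V. g u \<le> n}" for n
    proof (induction n)
      case 0
      have "{u\<in>V. g u \<le> 0} \<subseteq> {x0}" using F0 by auto
      then show ?case using finite_subset by blast
    next
      case (Suc n)
      have "{u\<in>V. g u \<le> Suc n} \<subseteq> {u\<in>V. g u \<le> n} \<union> (\<Union>z\<in>{u\<in>V. g u \<le> n}. nbhd V E z)"
      proof
        fix u assume u: "u \<in> {u\<in>V. g u \<le> Suc n}"
        show "u \<in> {u\<in>V. g u \<le> n} \<union> (\<Union>z\<in>{u\<in>V. g u \<le> n}. nbhd V E z)"
        proof (cases "g u = Suc n")
          case True
          then obtain z where "z \<in> V" "E z u" "g z = n" using F4 u by blast
          then show ?thesis using u unfolding nbhd_def by auto
        next
          case False then show ?thesis using u by auto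
        qed
      qed
      moreover have "finite (\<Union>z\<in>{u\<in>V. g u \<le> n}. nbhd V E z)"
        using Suc.IH nb_fin[OF sg lf] by auto
      ultimately show ?case using Suc.IH finite_subset by blast
    qed
    have "V = {u\<in>V. g u \<le> M}" using gM by auto
    then show ?thesis using finB by metis
  qed
  show ?thesis
  proof (intro exI ballI allI impI)
    fix v r assume "v \<in> V" "(r::real) \<ge> 0"
    have "gball V E r v \<subseteq> V" unfolding gball_def by auto
    then have "card (gball V E r v) \<le> card V" using finV by (rule card_mono[rotated])
    then show "real (card (gball V E r v)) \<le> poly [:real (card V):] r" by simp
  qed
qed

end
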